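(* Consider two runs $k=1,2$ of the dual opinions dynamics described in the context. Run $k$ takes place on an $(n,n,p_s^{(k)},p_d^{(k)})$-two-island network with groups $V_1,V_2$ and degree of homophily $h^{(k)}=p_s^{(k)}/p_d^{(k)}$, with common resilience $\phi^{(k)}\in(0,1)$, common bias parameter $b^{(k)}>0$, and the symmetric initial condition $x_i^{(k)}(0)=x_0\in(\tfrac12,1)$, $y_i^{(k)}(0)=y_0^{(k)}\in[\tfrac12,x_0]$ for $i\in V_1$ and $x_j^{(k)}(0)=1-x_0$, $y_j^{(k)}(0)=1-y_0^{(k)}$ for $j\in V_2$ (in particular both runs have the same initial implicit opinions). Suppose $y_0^{(1)}>y_0^{(2)}$, $\phi^{(1)}>\phi^{(2)}$, $b^{(1)}>b^{(2)}$ and $h^{(1)}>h^{(2)}$. Then for every $t>0$ and every $i\in V_1$, $$x_i^{(1)}(t)\ge x_i^{(2)}(t)\quad\text{and}\quad y_i^{(1)}(t)\ge y_i^{(2)}(t).$$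
   Context: Let $n\ge 1$ and $p_s,p_d\in(0,1)$ with $p_s>p_d$ and $np_s,np_d$ positive integers. An $(n,n,p_s,p_d)$-two-island network is an undirected graph (no self-loops) with vertex set $V=V_1\cup V_2$, $V_1\cap V_2=\emptyset$, $|V_1|=|V_2|=n$, such that each node of $V_1$ has exactly $np_s$ neighbours in $V_1$ and $np_d$ neighbours in $V_2$, and each node of $V_2$ has exactly $np_s$ neighbours in $V_2$ and $np_d$ neighbours in $V_1$. Its degree of homophily is $p_s/p_d>1$. Let $w_{ij}\in\{0,1\}$ be the adjacency matrix, $N_i$ the set of neighbours of $i$, and $d_i=\sum_{j\in N_i}w_{ij}$. Dual opinions dynamics with parameters $b>0$, $\phi\in(0,1)$: each individual $i\in V$ has an implicit opinion $x_i(t)\in[0,1]$ and an explicit opinion $y_i(t)\in[0,1]$, $t=0,1,2,\dots$, updated by $$x_i(t+1)=\frac{x_i(t)^{b}s_i(t)}{x_i(t)^{b}s_i(t)+(1-x_i(t))^{b}(d_i-s_i(t))},\qquad y_i(t+1)=\phi\, x_i(t+1)+(1-\phi)\hat y_{i,avg}(t),$$ where $s_i(t)=\sum_{j\in N_i}w_{ij}y_j(t)$ and $\hat y_{i,avg}(t)=\sum_{j\in N_i}\frac{w_{ij}}{d_i}y_j(t)$. *)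

theory Defs
  imports Complex_Main
begin

text \<open>Undirected graph on a finite vertex set V given by a 0/1 adjacency relation E
  (E i j means w_ij = 1).\<close>

definition nbrs :: "('a \<Rightarrow> 'a \<Rightarrow> bool) \<Rightarrow> 'a set \<Rightarrow> 'a \<Rightarrow> 'a set" where
  "nbrs E V i = {j \<in> V. E i j}"

definition two_island_network ::
  "nat \<Rightarrow> real \<Rightarrow> real \<Rightarrow> 'a set \<Rightarrow> 'a set \<Rightarrow> ('a \<Rightarrow> 'a \<Rightarrow> bool) \<Rightarrow> bool" where
  "two_island_network n ps pd V1 V2 E \<longleftrightarrow>
     n \<ge> 1 \<and> 0 < pd \<and> pd < ps \<and> ps < 1 \<and>
     (\<exists>m::nat. m > 0 \<and> real n * ps = real m) \<and>
     (\<exists>m::nat. m > 0 \<and> real n * pd = real m) \<and>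
     finite V1 \<and> finite V2 \<and> V1 \<inter> V2 = {} \<and> card V1 = n \<and> card V2 = n \<and>
     (\<forall>i j. E i j \<longrightarrow> i \<in> V1 \<union> V2 \<and> j \<in> V1 \<union> V2) \<and>
     (\<forall>i j. E i j \<longleftrightarrow> E j i) \<and>
     (\<forall>i. \<not> E i i) \<and>
     (\<forall>i\<in>V1. real (card (nbrs E V1 i)) = real n * ps \<and> real (card (nbrs E V2 i)) = real n * pd) \<and>
     (\<forall>i\<in>V2. real (card (nbrs E V2 i)) = real n * ps \<and> real (card (nbrs E V1 i)) = real n * pd)"

text \<open>One step of the dual opinions dynamics on the network (V, E), bias b, resilience phi.
  The state is the pair (x, y) of implicit and explicit opinions.\<close>

definition dual_step ::
  "('a \<Rightarrow> 'a \<Rightarrow> bool) \<Rightarrow> 'a set \<Rightarrow> real \<Rightarrow> real \<Rightarrow>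
   ('a \<Rightarrow> real) \<times> ('a \<Rightarrow> real) \<Rightarrow> ('a \<Rightarrow> real) \<times> ('a \<Rightarrow> real)" where
  "dual_step E V b phi st =
     (let x = fst st; y = snd st;
          s = (\<lambda>i. \<Sum>j\<in>nbrs E V i. y j);
          d = (\<lambda>i. real (card (nbrs E V i)));
          x' = (\<lambda>i. (x i powr b * s i) / (x i powr b * s i + (1 - x i) powr b * (d i - s i)))
      in (x', \<lambda>i. phi * x' i + (1 - phi) * (s i / d i)))"

primrec dual_traj ::
  "('a \<Rightarrow> 'a \<Rightarrow> bool) \<Rightarrow> 'a set \<Rightarrow> real \<Rightarrow> real \<Rightarrow>
   ('a \<Rightarrow> real) \<times> ('a \<Rightarrow> real) \<Rightarrow> nat \<Rightarrow> ('a \<Rightarrow> real) \<times> ('a \<Rightarrow> real)" where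
  "dual_traj E V b phi st0 0 = st0"
| "dual_traj E V b phi st0 (Suc t) = dual_step E V b phi (dual_traj E V b phi st0 t)"

definition sym_init :: "'a set \<Rightarrow> real \<Rightarrow> real \<Rightarrow> ('a \<Rightarrow> real) \<times> ('a \<Rightarrow> real)" where
  "sym_init V1 x0 y0 = ((\<lambda>i. if i \<in> V1 then x0 else 1 - x0), (\<lambda>i. if i \<in> V1 then y0 else 1 - y0))"

end

theory Submission
  imports Defs
begin

definition Fo :: "real \<Rightarrow> real \<Rightarrow> real \<Rightarrow> real" where
  "Fo b x q = x powr b * q / (x powr b * q + (1-x) powr b * (1-q))"
definition Qo :: "real \<Rightarrow> real \<Rightarrow> real \<Rightarrow> real" where
  "Qo ps pd y = (ps*y + pd*(1-y))/(ps+pd)"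

lemma nbrs_Un: "nbrs E (A \<union> B) i = nbrs E A i \<union> nbrs E B i"
  unfolding nbrs_def by auto

lemma sum_split:
  assumes "finite A" "finite B" "A \<inter> B = {}"
  shows "(\<Sum>k\<in>nbrs E (A \<union> B) i. f k) = (\<Sum>k\<in>nbrs E A i. f k) + (\<Sum>k\<in>nbrs E B i. f k)"
    "card (nbrs E (A \<union> B) i) = card (nbrs E A i) + card (nbrs E B i)"
proof -
  have f: "finite (nbrs E A i)" "finite (nbrs E B i)" using assms unfolding nbrs_def by auto
  have d: "nbrs E A i \<inter> nbrs E B i = {}" using assms unfolding nbrs_def by auto
  show "(\<Sum>k\<in>nbrs E (A \<union> B) i. f k) = (\<Sum>k\<in>nbrs E A i. f k) + (\<Sum>k\<in>nbrs E B i. f k)"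
    unfolding nbrs_Un using sum.union_disjoint[OF f d] by simp
  show "card (nbrs E (A \<union> B) i) = card (nbrs E A i) + card (nbrs E B i)"
    unfolding nbrs_Un using card_Un_disjoint[OF f d] by simp
qed

lemma sum_const_on:
  assumes "\<forall>k\<in>A. f k = c" shows "(\<Sum>k\<in>nbrs E A i. f k) = real (card (nbrs E A i)) * c"
proof -
  have "(\<Sum>k\<in>nbrs E A i. f k) = (\<Sum>k\<in>nbrs E A i. c)"
    by (rule sum.cong) (use assms in \<open>auto simp: nbrs_def\<close>)
  then show ?thesis by simp
qed

lemma xform:
  assumes d: "d > 0" and x: "0 < x" "x < 1" and q: "0 < q" "q < 1"
  shows "x powr b * (d*q) / (x powr b * (d*q) + (1-x) powr b * (d - d*q)) = Fo b x q"
proof -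
  have "d - d*q = d*(1-q)" by (simp add: algebra_simps)
  moreover have "x powr b * (d*q) + (1-x) powr b * (d*(1-q)) = d * (x powr b * q + (1-x) powr b * (1-q))"
    by (simp add: algebra_simps)
  ultimately show ?thesis using d unfolding Fo_def by simp
qed

lemma xform2:
  assumes d: "d > 0" and x: "0 < x" "x < 1" and q: "0 < q" "q < 1"
  shows "(1-x) powr b * (d*(1-q)) / ((1-x) powr b * (d*(1-q)) + (1-(1-x)) powr b * (d - d*(1-q))) = 1 - Fo b x q"
proof -
  define A where "A = x powr b * q"
  define B where "B = (1-x) powr b * (1-q)"
  have A: "A > 0" and B: "B > 0" using x q unfolding A_def B_def by simp_all
  have e1: "(1-x) powr b * (d*(1-q)) = d * B" unfolding B_def by simp
  have e2: "(1-(1-x)) powr b * (d - d*(1-q)) = d * A" unfolding A_def by (simp add: algebra_simps)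
  have "d*B + d*A = d*(A+B)" by (simp add: algebra_simps)
  then have "d*B / (d*B + d*A) = B/(A+B)" using d A B by simp
  also have "... = 1 - A/(A+B)" using A B by (simp add: field_simps)
  finally show ?thesis unfolding e1 e2 Fo_def A_def[symmetric] B_def[symmetric] .
qed

lemma step_sym:
  assumes net: "two_island_network n ps pd V1 V2 E"
    and s1: "\<forall>j\<in>V1. fst st j = x \<and> snd st j = y"
    and s2: "\<forall>j\<in>V2. fst st j = 1-x \<and> snd st j = 1-y"
    and x: "0<x" "x<1" and y: "0<y" "y<1"
  shows "\<forall>j\<in>V1. fst (dual_step E (V1\<union>V2) b phi st) j = Fo b x (Qo ps pd y)
            \<and> snd (dual_step E (V1\<union>V2) b phi st) j = phi * Fo b x (Qo ps pd y) + (1-phi) * Qo ps pd y"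
    "\<forall>j\<in>V2. fst (dual_step E (V1\<union>V2) b phi st) j = 1 - Fo b x (Qo ps pd y)
            \<and> snd (dual_step E (V1\<union>V2) b phi st) j = 1 - (phi * Fo b x (Qo ps pd y) + (1-phi) * Qo ps pd y)"
proof -
  from net have fin: "finite V1" "finite V2" "V1 \<inter> V2 = {}" and n1: "n \<ge> 1"
    and pd: "0 < pd" "pd < ps"
    and c1: "\<forall>i\<in>V1. real (card (nbrs E V1 i)) = real n * ps \<and> real (card (nbrs E V2 i)) = real n * pd"
    and c2: "\<forall>i\<in>V2. real (card (nbrs E V2 i)) = real n * ps \<and> real (card (nbrs E V1 i)) = real n * pd"
    unfolding two_island_network_def by auto
  define a where "a = real n * ps"
  define c where "c = real n * pd"
  define d where "d = a + c"
  define q where "q = Qo ps pd y"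
  have npos: "real n > 0" using n1 by simp
  have apos: "a > 0" "c > 0" unfolding a_def c_def using npos pd by auto
  have dpos: "d > 0" using apos d_def by simp
  have qd: "d * q = a*y + c*(1-y)" unfolding d_def q_def Qo_def a_def c_def using npos pd
    by (simp add: field_simps)
  have q01: "0 < q" "q < 1" unfolding q_def Qo_def using pd y
  proof -
    have "ps*y + pd*(1-y) > 0" using pd y by (simp add: add_pos_nonneg)
    moreover have "ps*y < ps*1" using pd y by (intro mult_strict_left_mono) auto
    moreover have "pd*(1-y) \<le> pd*1" using pd y by (intro mult_left_mono) auto
    ultimately have "ps*y + pd*(1-y) > 0" "ps*y + pd*(1-y) < ps + pd" by linarith+
    then show "0 < (ps*y + pd*(1-y))/(ps+pd)" "(ps*y + pd*(1-y))/(ps+pd) < 1"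
      using pd by (simp_all add: divide_pos_pos)
  qed
  have yv1: "\<forall>k\<in>V1. snd st k = y" and yv2: "\<forall>k\<in>V2. snd st k = 1-y"
    and xv1: "\<forall>k\<in>V1. fst st k = x" and xv2: "\<forall>k\<in>V2. fst st k = 1-x" using s1 s2 by auto
  show "\<forall>j\<in>V1. fst (dual_step E (V1\<union>V2) b phi st) j = Fo b x (Qo ps pd y)
            \<and> snd (dual_step E (V1\<union>V2) b phi st) j = phi * Fo b x (Qo ps pd y) + (1-phi) * Qo ps pd y"
  proof
    fix j assume j: "j \<in> V1"
    have S: "(\<Sum>k\<in>nbrs E (V1\<union>V2) j. snd st k) = d*q"
      using sum_split(1)[OF fin, where E=E and i=j and f="snd st"] sum_const_on[OF yv1, where E=E and i=j] sum_const_on[OF yv2, where E=E and i=j]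
        c1 j qd unfolding a_def c_def by simp
    have D: "real (card (nbrs E (V1\<union>V2) j)) = d"
      using sum_split(2)[OF fin, where E=E and i=j] c1 j unfolding d_def a_def c_def by simp
    have X: "fst (dual_step E (V1\<union>V2) b phi st) j = Fo b x q"
      unfolding dual_step_def Let_def using S D xv1 j xform[OF dpos x q01, of b] by simp
    have Y: "snd (dual_step E (V1\<union>V2) b phi st) j = phi * fst (dual_step E (V1\<union>V2) b phi st) j + (1-phi) * q"
      unfolding dual_step_def Let_def using S D dpos by simp
    show "fst (dual_step E (V1\<union>V2) b phi st) j = Fo b x (Qo ps pd y)
            \<and> snd (dual_step E (V1\<union>V2) b phi st) j = phi * Fo b x (Qo ps pd y) + (1-phi) * Qo ps pd y"
      using X Y[unfolded X] unfolding q_def by (simp add: algebra_simps)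
  qed
  show "\<forall>j\<in>V2. fst (dual_step E (V1\<union>V2) b phi st) j = 1 - Fo b x (Qo ps pd y)
            \<and> snd (dual_step E (V1\<union>V2) b phi st) j = 1 - (phi * Fo b x (Qo ps pd y) + (1-phi) * Qo ps pd y)"
  proof
    fix j assume j: "j \<in> V2"
    have S: "(\<Sum>k\<in>nbrs E (V1\<union>V2) j. snd st k) = d*(1-q)"
      using sum_split(1)[OF fin, where E=E and i=j and f="snd st"] sum_const_on[OF yv1, where E=E and i=j] sum_const_on[OF yv2, where E=E and i=j]
        c2 j qd unfolding a_def c_def d_def by (simp add: algebra_simps)
    have D: "real (card (nbrs E (V1\<union>V2) j)) = d"
      using sum_split(2)[OF fin, where E=E and i=j] c2 j unfolding d_def a_def c_def by simp
    have X: "fst (dual_step E (V1\<union>V2) b phi st) j = 1 - Fo b x q"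
      unfolding dual_step_def Let_def using S D xv2 j xform2[OF dpos x q01, of b] by simp
    have Y: "snd (dual_step E (V1\<union>V2) b phi st) j = phi * fst (dual_step E (V1\<union>V2) b phi st) j + (1-phi) * (1-q)"
      unfolding dual_step_def Let_def using S D dpos by simp
    show "fst (dual_step E (V1\<union>V2) b phi st) j = 1 - Fo b x (Qo ps pd y)
            \<and> snd (dual_step E (V1\<union>V2) b phi st) j = 1 - (phi * Fo b x (Qo ps pd y) + (1-phi) * Qo ps pd y)"
      using X Y[unfolded X] unfolding q_def by (simp add: algebra_simps)
  qed
qed


lemma Fo_alt:
  assumes x: "0 < x" "x < 1"
  shows "Fo b x q = ((x/(1-x)) powr b * q) / ((x/(1-x)) powr b * q + (1-q))"
proof -
  have p: "(1-x) powr b > 0" using x by simp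
  have e: "(x/(1-x)) powr b = x powr b / (1-x) powr b" using x by (simp add: powr_divide)
  show ?thesis unfolding Fo_def e using p by (simp add: field_simps)
qed

lemma R_ge:
  fixes x b :: real
  assumes "1/2 < x" "x < 1" "b > 0"
  shows "(x/(1-x)) powr b > 1"
proof -
  have "x/(1-x) > 1" using assms by (simp add: field_simps)
  then have "1 powr b < (x/(1-x)) powr b" using assms by (intro powr_less_mono2) auto
  then show ?thesis by simp
qed

lemma R_mono:
  fixes x1 x2 b1 b2 :: real
  assumes "1/2 < x2" "x2 \<le> x1" "x1 < 1" "0 < b2" "b2 \<le> b1"
  shows "(x2/(1-x2)) powr b2 \<le> (x1/(1-x1)) powr b1"
proof -
  have r: "x2/(1-x2) \<ge> 1" using assms by (simp add: field_simps)
  have r2: "x2/(1-x2) \<le> x1/(1-x1)" using assms by (simp add: field_simps)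
  have "(x2/(1-x2)) powr b2 \<le> (x2/(1-x2)) powr b1" using powr_mono[OF assms(5) r] .
  also have "... \<le> (x1/(1-x1)) powr b1" using r r2 assms by (intro powr_mono2) auto
  finally show ?thesis .
qed


lemma G_mono:
  fixes R1 R2 q1 q2 :: real
  assumes "1 \<le> R2" "R2 \<le> R1" "0 < q2" "q2 \<le> q1" "q1 < 1"
  shows "R2*q2/(R2*q2 + (1-q2)) \<le> R1*q1/(R1*q1 + (1-q1))"
proof -
  have k0: "q2*(1-q1) \<le> q1*(1-q2)" using assms by (simp add: algebra_simps)
  have key: "R2*(q2*(1-q1)) \<le> R1*(q1*(1-q2))"
    using assms k0 by (intro mult_mono) auto
  have p1: "R2*q2 + (1-q2) > 0" "R1*q1 + (1-q1) > 0" using assms by (simp_all add: add_pos_pos)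
  have "R2*q2*(R1*q1 + (1-q1)) \<le> R1*q1*(R2*q2 + (1-q2))"
    using key by (simp add: algebra_simps)
  then show ?thesis using p1 by (simp add: divide_simps)
qed

lemma G_ge:
  fixes R q :: real
  assumes "1 \<le> R" "0 < q" "q < 1"
  shows "q \<le> R*q/(R*q + (1-q))" "R*q/(R*q + (1-q)) < 1"
proof -
  have p: "R*q + (1-q) > 0" using assms by (simp add: add_pos_pos)
  have "1*(q*(1-q)) \<le> R*(q*(1-q))" using assms by (intro mult_right_mono) auto
  then have "q*(R*q + (1-q)) \<le> R*q" using assms by (simp add: algebra_simps)
  then show "q \<le> R*q/(R*q + (1-q))" using p by (simp add: divide_simps)
  show "R*q/(R*q + (1-q)) < 1" using p assms by (simp add: divide_simps)
qed

lemma G_gt: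
  fixes R q :: real
  assumes "1 < R" "1/2 \<le> q" "q < 1"
  shows "1/2 < R*q/(R*q + (1-q))"
proof -
  have p: "R*q + (1-q) > 0" using assms by (simp add: add_pos_pos)
  have "q < R*q" using assms by simp
  then have "1-q < R*q" using assms by linarith
  then show ?thesis using p assms by (simp add: divide_simps)
qed

lemma Q_alt:
  fixes ps pd y :: real
  assumes "0 < pd" "pd < ps"
  shows "Qo ps pd y = 1/2 + (y - 1/2) * (1 - 2/(ps/pd + 1))"
  using assms unfolding Qo_def by (simp add: field_simps)

lemma Q_props:
  fixes ps pd y :: real
  assumes "0 < pd" "pd < ps" "1/2 \<le> y" "y < 1"
  shows "1/2 \<le> Qo ps pd y" "Qo ps pd y < 1"
proof -
  have h: "0 \<le> 1 - 2/(ps/pd + 1)" "1 - 2/(ps/pd + 1) < 1" using assms by (simp_all add: field_simps)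
  have "0 \<le> (y - 1/2) * (1 - 2/(ps/pd + 1))" using h assms by simp
  then show "1/2 \<le> Qo ps pd y" using Q_alt[OF assms(1,2)] by simp
  have "(y - 1/2) * (1 - 2/(ps/pd + 1)) \<le> (y - 1/2) * 1" using h assms by (intro mult_left_mono) auto
  then show "Qo ps pd y < 1" using Q_alt[OF assms(1,2)] assms by simp
qed

lemma Q_mono:
  fixes ps1 pd1 ps2 pd2 y1 y2 :: real
  assumes "0 < pd1" "pd1 < ps1" "0 < pd2" "pd2 < ps2" "1/2 \<le> y2" "y2 \<le> y1"
    "ps2/pd2 \<le> ps1/pd1"
  shows "Qo ps2 pd2 y2 \<le> Qo ps1 pd1 y1"
proof -
  have h2: "0 \<le> 1 - 2/(ps2/pd2 + 1)" using assms by (simp add: field_simps)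
  have hp: "ps2/pd2 + 1 > 0" using assms by (simp add: add_pos_pos)
  have "2/(ps1/pd1 + 1) \<le> 2/(ps2/pd2 + 1)" using assms hp by (intro divide_left_mono) auto
  then have h12: "1 - 2/(ps2/pd2 + 1) \<le> 1 - 2/(ps1/pd1 + 1)" by simp
  have "(y2 - 1/2) * (1 - 2/(ps2/pd2 + 1)) \<le> (y1 - 1/2) * (1 - 2/(ps1/pd1 + 1))"
    using h2 h12 assms by (intro mult_mono) auto
  then show ?thesis using Q_alt[OF assms(1,2)] Q_alt[OF assms(3,4)] by simp
qed


lemma Fo_props:
  fixes b x q :: real
  assumes "1/2 < x" "x < 1" "b > 0" "1/2 \<le> q" "q < 1"
  shows "q \<le> Fo b x q" "1/2 < Fo b x q" "Fo b x q < 1"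
proof -
  have x: "0 < x" "x < 1" using assms by auto
  have R: "(x/(1-x)) powr b > 1" using R_ge assms by auto
  show "q \<le> Fo b x q" "Fo b x q < 1" unfolding Fo_alt[OF x] using G_ge[of "(x/(1-x)) powr b" q] R assms by auto
  show "1/2 < Fo b x q" unfolding Fo_alt[OF x] using G_gt[of "(x/(1-x)) powr b" q] R assms by auto
qed

lemma Fo_mono:
  fixes b1 b2 x1 x2 q1 q2 :: real
  assumes "1/2 < x2" "x2 \<le> x1" "x1 < 1" "0 < b2" "b2 \<le> b1" "1/2 \<le> q2" "q2 \<le> q1" "q1 < 1"
  shows "Fo b2 x2 q2 \<le> Fo b1 x1 q1"
proof -
  have x1: "0 < x1" "x1 < 1" and x2: "0 < x2" "x2 < 1" using assms by auto
  have R2: "(x2/(1-x2)) powr b2 > 1" using R_ge assms by auto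
  have R12: "(x2/(1-x2)) powr b2 \<le> (x1/(1-x1)) powr b1" using R_mono assms by auto
  show ?thesis unfolding Fo_alt[OF x1] Fo_alt[OF x2] by (rule G_mono[OF less_imp_le[OF R2] R12]) (use assms in auto)
qed

definition nxt :: "real \<Rightarrow> real \<Rightarrow> real \<Rightarrow> real \<Rightarrow> real \<times> real \<Rightarrow> real \<times> real" where
  "nxt b phi ps pd p = (Fo b (fst p) (Qo ps pd (snd p)),
      phi * Fo b (fst p) (Qo ps pd (snd p)) + (1-phi) * Qo ps pd (snd p))"

primrec sq :: "real \<Rightarrow> real \<Rightarrow> real \<Rightarrow> real \<Rightarrow> real \<times> real \<Rightarrow> nat \<Rightarrow> real \<times> real" where
  "sq b phi ps pd p0 0 = p0"
| "sq b phi ps pd p0 (Suc t) = nxt b phi ps pd (sq b phi ps pd p0 t)"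

lemma convex_bounds:
  fixes phi F Q :: real
  assumes "0 < phi" "phi < 1" "1/2 \<le> F" "F < 1" "1/2 \<le> Q" "Q < 1"
  shows "1/2 \<le> phi*F + (1-phi)*Q" "phi*F + (1-phi)*Q < 1"
proof -
  have a: "phi*(1/2) \<le> phi*F" "(1-phi)*(1/2) \<le> (1-phi)*Q" using assms by (intro mult_left_mono; auto)+
  have b: "phi*F < phi*1" "(1-phi)*Q \<le> (1-phi)*1" using assms by (intro mult_strict_left_mono mult_left_mono; auto)+
  have e: "phi*F + (1-phi)*Q - 1/2 = (phi*F - phi*(1/2)) + ((1-phi)*Q - (1-phi)*(1/2))"
    "phi*F + (1-phi)*Q - 1 = (phi*F - phi*1) + ((1-phi)*Q - (1-phi)*1)" by (simp_all add: field_simps)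
  show "1/2 \<le> phi*F + (1-phi)*Q" using a e(1) by linarith
  show "phi*F + (1-phi)*Q < 1" using b e(2) by linarith
qed

lemma sq_inv:
  fixes b phi ps pd :: real
  assumes "0 < pd" "pd < ps" "0 < phi" "phi < 1" "b > 0"
    "1/2 < fst p0" "fst p0 < 1" "1/2 \<le> snd p0" "snd p0 < 1"
  shows "1/2 < fst (sq b phi ps pd p0 t) \<and> fst (sq b phi ps pd p0 t) < 1
       \<and> 1/2 \<le> snd (sq b phi ps pd p0 t) \<and> snd (sq b phi ps pd p0 t) < 1"
proof (induction t)
  case 0
  then show ?case using assms by simp
next
  case (Suc t)
  let ?x = "fst (sq b phi ps pd p0 t)" and ?y = "snd (sq b phi ps pd p0 t)"
  have Q: "1/2 \<le> Qo ps pd ?y" "Qo ps pd ?y < 1" using Q_props assms Suc by auto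
  have F: "1/2 < Fo b ?x (Qo ps pd ?y)" "Fo b ?x (Qo ps pd ?y) < 1" using Fo_props Q assms Suc by auto
  have C: "1/2 \<le> phi * Fo b ?x (Qo ps pd ?y) + (1-phi) * Qo ps pd ?y"
     "phi * Fo b ?x (Qo ps pd ?y) + (1-phi) * Qo ps pd ?y < 1"
    using convex_bounds[of phi "Fo b ?x (Qo ps pd ?y)" "Qo ps pd ?y"] Q F assms by auto
  show ?case using F C by (simp add: nxt_def)
qed


lemma traj_sym:
  assumes net: "two_island_network n ps pd V1 V2 E"
    and "0 < phi" "phi < 1" "b > 0" "1/2 < x0" "x0 < 1" "1/2 \<le> y0" "y0 < 1"
  shows "(\<forall>j\<in>V1. fst (dual_traj E (V1\<union>V2) b phi (sym_init V1 x0 y0) t) j = fst (sq b phi ps pd (x0,y0) t)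
              \<and> snd (dual_traj E (V1\<union>V2) b phi (sym_init V1 x0 y0) t) j = snd (sq b phi ps pd (x0,y0) t))
       \<and> (\<forall>j\<in>V2. fst (dual_traj E (V1\<union>V2) b phi (sym_init V1 x0 y0) t) j = 1 - fst (sq b phi ps pd (x0,y0) t)
              \<and> snd (dual_traj E (V1\<union>V2) b phi (sym_init V1 x0 y0) t) j = 1 - snd (sq b phi ps pd (x0,y0) t))"
proof (induction t)
  case 0
  have "V1 \<inter> V2 = {}" using net unfolding two_island_network_def by auto
  then show ?case unfolding sym_init_def by auto
next
  case (Suc t)
  have pd: "0 < pd" "pd < ps" using net unfolding two_island_network_def by auto
  have I: "1/2 < fst (sq b phi ps pd (x0,y0) t) \<and> fst (sq b phi ps pd (x0,y0) t) < 1
       \<and> 1/2 \<le> snd (sq b phi ps pd (x0,y0) t) \<and> snd (sq b phi ps pd (x0,y0) t) < 1"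
    using sq_inv[OF pd assms(2-4), of "(x0,y0)" t] assms by simp
  have x: "0 < fst (sq b phi ps pd (x0,y0) t)" "fst (sq b phi ps pd (x0,y0) t) < 1"
    and y: "0 < snd (sq b phi ps pd (x0,y0) t)" "snd (sq b phi ps pd (x0,y0) t) < 1" using I by auto
  from step_sym[OF net _ _ x y, of "dual_traj E (V1\<union>V2) b phi (sym_init V1 x0 y0) t" b phi] Suc.IH
  show ?case by (simp add: nxt_def)
qed

lemma sq_mono:
  fixes bu bv fu fv ps1 pd1 ps2 pd2 xz yu yv :: real
  assumes "0 < pd1" "pd1 < ps1" "0 < pd2" "pd2 < ps2" "ps2/pd2 \<le> ps1/pd1"
    "0 < fv" "fv \<le> fu" "fu < 1" "0 < bv" "bv \<le> bu"
    "1/2 < xz" "xz < 1" "1/2 \<le> yv" "yv \<le> yu" "yu < 1"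
  shows "fst (sq bv fv ps2 pd2 (xz,yv) t) \<le> fst (sq bu fu ps1 pd1 (xz,yu) t)
       \<and> snd (sq bv fv ps2 pd2 (xz,yv) t) \<le> snd (sq bu fu ps1 pd1 (xz,yu) t)"
proof (induction t)
  case 0
  then show ?case using assms by simp
next
  case (Suc t)
  define x1 where "x1 = fst (sq bu fu ps1 pd1 (xz,yu) t)"
  define y1 where "y1 = snd (sq bu fu ps1 pd1 (xz,yu) t)"
  define x2 where "x2 = fst (sq bv fv ps2 pd2 (xz,yv) t)"
  define y2 where "y2 = snd (sq bv fv ps2 pd2 (xz,yv) t)"
  have I1: "1/2 < x1" "x1 < 1" "1/2 \<le> y1" "y1 < 1"
    using sq_inv[of pd1 ps1 fu bu "(xz,yu)" t] assms unfolding x1_def y1_def by auto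
  have I2: "1/2 < x2" "x2 < 1" "1/2 \<le> y2" "y2 < 1"
    using sq_inv[of pd2 ps2 fv bv "(xz,yv)" t] assms unfolding x2_def y2_def by auto
  have le: "x2 \<le> x1" "y2 \<le> y1" using Suc.IH unfolding x1_def x2_def y1_def y2_def by auto
  define q1 where "q1 = Qo ps1 pd1 y1"
  define q2 where "q2 = Qo ps2 pd2 y2"
  have Q: "q2 \<le> q1" unfolding q1_def q2_def using Q_mono assms I2 le by auto
  have Q1: "1/2 \<le> q1" "q1 < 1" unfolding q1_def using Q_props assms I1 by auto
  have Q2: "1/2 \<le> q2" "q2 < 1" unfolding q2_def using Q_props assms I2 by auto
  have F: "Fo bv x2 q2 \<le> Fo bu x1 q1" using Fo_mono[of x2 x1 bv bu q2 q1] I1 I2 le assms Q Q1 Q2 by auto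
  have F1: "q1 \<le> Fo bu x1 q1" using Fo_props(1)[of x1 bu q1] I1 Q1 assms by auto
  have a: "fv * Fo bv x2 q2 \<le> fv * Fo bu x1 q1" using F assms by (intro mult_left_mono) auto
  have b: "(1-fv) * q2 \<le> (1-fv) * q1" using Q assms by (intro mult_left_mono) auto
  have c: "(fv - fu) * (Fo bu x1 q1 - q1) \<le> 0" using F1 assms by (intro mult_nonpos_nonneg) auto
  have e: "fu * Fo bu x1 q1 + (1-fu)*q1 - (fv * Fo bu x1 q1 + (1-fv)*q1) = - ((fv - fu) * (Fo bu x1 q1 - q1))"
    by (simp add: algebra_simps)
  have Y: "fv * Fo bv x2 q2 + (1-fv) * q2 \<le> fu * Fo bu x1 q1 + (1-fu)*q1"
    using a b c e by linarith
  show ?case using F Y unfolding nxt_def sq.simps x1_def[symmetric] x2_def[symmetric]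
     y1_def[symmetric] y2_def[symmetric] q1_def[symmetric] q2_def[symmetric] by simp
qed

theorem theorem5:
  fixes n :: nat and V1 V2 :: "'a set" and E1 E2 :: "'a \<Rightarrow> 'a \<Rightarrow> bool"
    and ps1 pd1 ps2 pd2 phi1 phi2 b1 b2 x0 y01 y02 :: real
  assumes net1: "two_island_network n ps1 pd1 V1 V2 E1"
    and net2: "two_island_network n ps2 pd2 V1 V2 E2"
    and phi1: "0 < phi1" "phi1 < 1" and phi2: "0 < phi2" "phi2 < 1"
    and b1: "b1 > 0" and b2: "b2 > 0"
    and x0: "1/2 < x0" "x0 < 1"
    and y01: "1/2 \<le> y01" "y01 \<le> x0"
    and y02: "1/2 \<le> y02" "y02 \<le> x0"
    and y_gt: "y01 > y02"
    and phi_gt: "phi1 > phi2"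
    and b_gt: "b1 > b2"
    and h_gt: "ps1 / pd1 > ps2 / pd2"
    and t: "t > (0::nat)"
    and i: "i \<in> V1"
  shows "fst (dual_traj E1 (V1 \<union> V2) b1 phi1 (sym_init V1 x0 y01) t) i
           \<ge> fst (dual_traj E2 (V1 \<union> V2) b2 phi2 (sym_init V1 x0 y02) t) i
       \<and> snd (dual_traj E1 (V1 \<union> V2) b1 phi1 (sym_init V1 x0 y01) t) i
           \<ge> snd (dual_traj E2 (V1 \<union> V2) b2 phi2 (sym_init V1 x0 y02) t) i"
proof -
  have pd1: "0 < pd1" "pd1 < ps1" using net1 unfolding two_island_network_def by auto
  have pd2: "0 < pd2" "pd2 < ps2" using net2 unfolding two_island_network_def by auto
  note T1 = traj_sym[OF net1 phi1 b1 x0 y01(1), of t]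
  note T2 = traj_sym[OF net2 phi2 b2 x0 y02(1), of t]
  note M = sq_mono[OF pd1 pd2, where bu=b1 and bv=b2 and fu=phi1 and fv=phi2 and xz=x0 and yu=y01 and yv=y02 and t=t]
  show ?thesis using T1 T2 M i y01 y02 x0 phi1 phi2 b1 b2 y_gt phi_gt b_gt h_gt by auto
qed

end
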